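(* Let $\gamma=(\alpha,\beta)\in\mathfrak{D}$ and $T=T_\gamma$. For every integer $\ell\ge1$ there exist $C_1,C_2>0$ depending on $\gamma,\ell$ such that for all $m\ge1$, $$\sup_{x\in(0,1):\,T^m(x)\ge b_\ell}\frac{1}{(T^m)'(x)}\le C_1\,m^{-1-\frac1{\alpha\beta}},\qquad \sup_{x\in(0,1):\,T^m(x)\ge b_\ell}\frac{(T^m)''(x)}{((T^m)'(x))^2}\le C_2.$$
   Context: $\mathfrak{D}=\{(\alpha,\beta)\in(0,1)\times[1,\infty):\alpha\beta<1\}$. For $\gamma=(\alpha,\beta)\in\mathfrak{D}$, $T_\gamma(x)=x(1+2^\alpha x^\alpha)$ on $[0,\tfrac12)$ and $T_\gamma(x)=2^\beta(x-\tfrac12)^\beta$ on $[\tfrac12,1]$. Let $f_{\gamma,1}(x)=x(1+2^\alpha x^\alpha)$ on $[0,\tfrac12]$ (a bijection onto $[0,1]$) and $b_\ell=f_{\gamma,1}^{-\ell}(\tfrac12)$, the $\ell$-th preimage of $\tfrac12$ under the left branch. *)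

theory Defs
  imports "HOL-Analysis.Analysis"
begin

definition paramD :: "(real \<times> real) set" where
  "paramD = {(a, b). 0 < a \<and> a < 1 \<and> 1 \<le> b \<and> a * b < 1}"

text \<open>The map T_gamma on [0,1] (formula extended outside [0,1]; only values on [0,1] matter).\<close>
definition Tmap :: "real \<Rightarrow> real \<Rightarrow> real \<Rightarrow> real" where
  "Tmap a b x = (if x < 1/2 then x * (1 + (2 powr a) * (x powr a))
                 else (2 powr b) * ((x - 1/2) powr b))"

definition fleft :: "real \<Rightarrow> real \<Rightarrow> real" where
  "fleft a x = x * (1 + (2 powr a) * (x powr a))"

definition bseq :: "real \<Rightarrow> nat \<Rightarrow> real" where
  "bseq a l = ((the_inv_into {0..1/2} (fleft a)) ^^ l) (1/2)"

end

theory Submission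
  imports Defs
begin


locale prm = fixes a b :: real
  assumes a0: "0<a" and a1: "a<1" and b1: "1\<le>b" and ab1: "a*b<1"
begin

definition dT :: "real \<Rightarrow> real" where
  "dT y = (if y < 1/2 then 1 + (1+a) * (2*y) powr a else 2*b*(2*y-1) powr (b-1))"
definition d2T :: "real \<Rightarrow> real" where
  "d2T y = (if y < 1/2 then (1+a)*a*(2*y) powr a / y else 4*b*(b-1)*(2*y-1) powr (b-2))"

lemma T_left: "0 < y \<Longrightarrow> y < 1/2 \<Longrightarrow> Tmap a b y = y + (2*y) powr (1+a) / 2"
  by (simp add: Tmap_def powr_add powr_mult field_simps)

lemma F_eq: "0 < y \<Longrightarrow> fleft a y = y * (1 + (2*y) powr a)"
  by (simp add: fleft_def powr_mult)

lemma T_left': "y < 1/2 \<Longrightarrow> Tmap a b y = fleft a y"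
  by (simp add: Tmap_def fleft_def)

lemma T_right: "1/2 < y \<Longrightarrow> Tmap a b y = (2*y-1) powr b"
proof -
  assume y: "1/2 < y"
  have e: "2*(y-1/2) = 2*y-1" by simp
  have "2 powr b * (y-1/2) powr b = (2*y-1) powr b"
    using powr_mult[of 2 "y-1/2" b] y e by simp
  then show ?thesis using y by (simp add: Tmap_def)
qed

lemma dT_deriv: assumes "0<y" "y<1" "y \<noteq> 1/2"
  shows "(Tmap a b has_real_derivative dT y) (at y)"
proof (cases "y < 1/2")
  case True
  have "((\<lambda>y. y + (2*y) powr (1+a) / 2) has_real_derivative dT y) (at y)"
    using assms True by (auto intro!: derivative_eq_intros simp: field_simps dT_def)
  then show ?thesis
    apply (rule has_field_derivative_transform_within_open[where S="{0<..<1/2}"])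
    using True assms by (auto simp: T_left dT_def)
next
  case False
  then have y: "1/2 < y" using assms by auto
  have "((\<lambda>y. (2*y-1) powr b) has_real_derivative dT y) (at y)"
    using y by (auto intro!: derivative_eq_intros simp: field_simps dT_def)
  then show ?thesis
    apply (rule has_field_derivative_transform_within_open[where S="{1/2<..}"])
    using y by (auto simp: T_right dT_def)
qed

lemma d2T_deriv: assumes "0<y" "y<1" "y \<noteq> 1/2"
  shows "(dT has_real_derivative d2T y) (at y)"
proof (cases "y < 1/2")
  case True
  have "((\<lambda>y. 1 + (1+a) * (2*y) powr a) has_real_derivative d2T y) (at y)"
    using assms True apply (auto intro!: derivative_eq_intros simp: d2T_def)
    by (simp add: powr_diff field_simps)
  then show ?thesis
    apply (rule has_field_derivative_transform_within_open[where S="{0<..<1/2}"])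
    using True assms by (auto simp: d2T_def dT_def)
next
  case False
  then have y: "1/2 < y" using assms by auto
  have "((\<lambda>y. 2*b*(2*y-1) powr (b-1)) has_real_derivative d2T y) (at y)"
    using y by (auto intro!: derivative_eq_intros simp: field_simps d2T_def)
  then show ?thesis
    apply (rule has_field_derivative_transform_within_open[where S="{1/2<..}"])
    using y by (auto simp: dT_def d2T_def)
qed

abbreviation TT where "TT m \<equiv> (Tmap a b ^^ m)"

primrec D :: "nat \<Rightarrow> real \<Rightarrow> real" where
  "D 0 x = 1" | "D (Suc m) x = dT (TT m x) * D m x"
primrec E :: "nat \<Rightarrow> real \<Rightarrow> real" where
  "E 0 x = 0" | "E (Suc m) x = d2T (TT m x) * (D m x)^2 + dT (TT m x) * E m x"

definition good :: "nat \<Rightarrow> real \<Rightarrow> bool" where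
  "good m x \<longleftrightarrow> (\<forall>j<m. TT j x \<in> {0<..<1} - {1/2})"

lemma good_Suc: "good (Suc m) x \<longleftrightarrow> good m x \<and> TT m x \<in> {0<..<1} - {1/2}"
  by (auto simp: good_def less_Suc_eq)

lemma iter_deriv: "good m x \<Longrightarrow> (TT m has_real_derivative D m x) (at x) \<and>
   (D m has_real_derivative E m x) (at x) \<and> eventually (good m) (nhds x)"
proof (induction m)
  case 0
  then show ?case by (auto simp: good_def)
next
  case (Suc m)
  then have gm: "good m x" and S: "TT m x \<in> {0<..<1} - {1/2}" by (auto simp: good_Suc)
  have IH: "(TT m has_real_derivative D m x) (at x) \<and>
   (D m has_real_derivative E m x) (at x) \<and> eventually (good m) (nhds x)"
    using Suc.IH gm by blast
  have d1: "(Tmap a b has_real_derivative dT (TT m x)) (at (TT m x))"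
    using S by (intro dT_deriv) auto
  have d2: "(dT has_real_derivative d2T (TT m x)) (at (TT m x))"
    using S by (intro d2T_deriv) auto
  have "((\<lambda>y. Tmap a b (TT m y)) has_real_derivative dT (TT m x) * D m x) (at x)"
    using DERIV_chain2[of "Tmap a b" "dT (TT m x)" "TT m" x] d1 IH by blast
  moreover have "(\<lambda>y. Tmap a b (TT m y)) = TT (Suc m)" by auto
  ultimately have A: "(TT (Suc m) has_real_derivative D (Suc m) x) (at x)" by simp
  have "((\<lambda>y. dT (TT m y)) has_real_derivative d2T (TT m x) * D m x) (at x)"
    using DERIV_chain2[of dT "d2T (TT m x)" "TT m" x] d2 IH by blast
  then have "((\<lambda>y. dT (TT m y) * D m y) has_real_derivative
      (d2T (TT m x) * D m x) * D m x + E m x * dT (TT m x)) (at x)"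
    using IH by (intro DERIV_mult) auto
  moreover have "(\<lambda>y. dT (TT m y) * D m y) = D (Suc m)" by auto
  moreover have "(d2T (TT m x) * D m x) * D m x + E m x * dT (TT m x) = E (Suc m) x"
    by (simp add: power2_eq_square algebra_simps)
  ultimately have B: "(D (Suc m) has_real_derivative E (Suc m) x) (at x)" by simp
  have "isCont (TT m) x" using IH DERIV_isCont by blast
  then have "eventually (\<lambda>y. TT m y \<in> {0<..<1} - {1/2}) (at x)"
    unfolding isCont_def using S by (intro topological_tendstoD) auto
  then have "eventually (\<lambda>y. TT m y \<in> {0<..<1} - {1/2}) (nhds x)"
    using S by (simp add: eventually_nhds_conv_at)
  then have "eventually (good (Suc m)) (nhds x)"
    using IH by (auto simp: good_Suc elim: eventually_elim2)
  then show ?case using A B by blast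
qed

lemma deriv_TT: "good m x \<Longrightarrow> deriv (TT m) x = D m x"
  using iter_deriv DERIV_imp_deriv by blast

lemma deriv2_TT: assumes "good m x" shows "deriv (deriv (TT m)) x = E m x"
proof -
  have ev: "eventually (good m) (nhds x)" using iter_deriv[OF assms] by blast
  have "eventually (\<lambda>y. deriv (TT m) y = D m y) (nhds x)"
    using ev by eventually_elim (rule deriv_TT)
  then have "(deriv (TT m) has_real_derivative E m x) (at x)"
    using iter_deriv[OF assms] DERIV_cong_ev[OF refl _ refl] by blast
  then show ?thesis using DERIV_imp_deriv by blast
qed

end


lemma two_le_b2: assumes "1 \<le> (b::real)" shows "2 \<le> b * 2 powr (1/b)"
proof -
  have e: "2 powr (1/b) = 2 * 2 powr (-(1-1/b))"
    by (simp add: powr_minus_divide powr_diff field_simps)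
  define X where "X = (1-1/b) * ln 2"
  have "2 powr (-(1-1/b)) = exp (-X)" by (simp add: powr_def X_def algebra_simps)
  moreover have "exp (-X) \<ge> 1 + (-X)" by (rule exp_ge_add_one_self)
  moreover have "(1-1/b) * ln 2 \<le> (1-1/b) * 1"
    using assms ln_2_less_1 by (intro mult_left_mono) (auto simp: field_simps)
  then have "X \<le> 1 - 1/b" unfolding X_def by simp
  ultimately have "2 powr (-(1-1/b)) \<ge> 1/b" by linarith
  then have "2 powr (1/b) \<ge> 2/b" using e by simp
  then have "b * 2 powr (1/b) \<ge> b * (2/b)" using assms by (intro mult_left_mono) auto
  then show ?thesis using assms by simp
qed

lemma RL_alg: fixes b u w :: real assumes "1\<le>b" "0<u" "u<1" "w = u powr b" "w < 1/2"
  shows "(b-1)/(b*w) + 20/(2*b*w/u) \<le> 8/w"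
proof -
  have w0: "0<w" using assms by simp
  have key: "10*u \<le> 7*b+1"
  proof (cases "b \<ge> 11/7")
    case True then show ?thesis using assms by linarith
  next
    case False
    have "u powr 2 \<le> u powr b" using assms False by (intro powr_mono') auto
    then have "u^2 < 1/2" using assms by (simp add: powr_numeral)
    then have "(10*u)^2 < 8^2" by (simp add: power_mult_distrib)
    then have "10*u < 8" using assms by (smt (verit) power_mono)
    then show ?thesis using assms by linarith
  qed
  have "(b-1)/(b*w) + 20/(2*b*w/u) = ((b-1) + 10*u)/(b*w)"
    using assms w0 by (simp add: field_simps)
  also have "\<dots> \<le> (8*b)/(b*w)" using key assms w0 by (intro divide_right_mono) auto
  also have "\<dots> = 8/w" using assms by simp
  finally show ?thesis .
qed

lemma RR_alg: fixes b w g :: real assumes "1\<le>b" "1/2 \<le> w" "2 \<le> g"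
  shows "(b-1)/(b*w) + 20/g \<le> 20"
proof -
  have h: "b*1 \<le> b*(2*w)" using assms by (intro mult_left_mono) auto
  have bw: "b*w>0" using assms by simp
  have "b-1 \<le> 2*(b*w)" using h by (simp add: algebra_simps)
  then have "(b-1)/(b*w) \<le> 2" using bw by (simp add: pos_divide_le_eq)
  moreover have "20/g \<le> 10" using assms by (simp add: field_simps)
  ultimately show ?thesis by simp
qed


lemma LL_alg0: fixes c y P q :: real assumes "0<y" "0<P" "0<q" "c*q \<le> 8*P*(P-q)"
  shows "(c/y)/P^2 + (8/y)/P \<le> 8/(y*q)"
proof -
  have e1: "(c/y)/P^2 + (8/y)/P = (c*q + 8*P*q)/(y*P^2*q)"
    using assms by (simp add: field_simps power2_eq_square)
  have e2: "8/(y*q) = (8*P^2)/(y*P^2*q)" using assms by (simp add: field_simps power2_eq_square)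
  have "c*q + 8*P*q \<le> 8*P^2" using assms(4) by (simp add: algebra_simps power2_eq_square)
  then show ?thesis unfolding e1 e2 using assms by (intro divide_right_mono) auto
qed

lemma LL_alg: fixes a t y :: real assumes "0<a" "a<1" "0<t" "0<y"
  shows "((1+a)*a*t/y)/(1+(1+a)*t)^2 + (8/y)/(1+(1+a)*t) \<le> 8/(y*(1+t))"
proof (rule LL_alg0)
  have f': "1+t \<le> 1+(1+a)*t" using assms by auto
  have "(1+a)*(1+t) \<le> 2*(1+t)" using assms by (intro mult_right_mono) auto
  moreover have "a*t>0" using assms by simp
  moreover have "(1+a)*(1+t) = 1+t+a+a*t" "8*(1+(1+a)*t) = 8+8*t+8*(a*t)" by (simp_all add: algebra_simps)
  ultimately have "(1+a)*(1+t) \<le> 8*(1+(1+a)*t)" using assms by linarith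
  then have "(1+a)*(1+t)*(a*t) \<le> 8*(1+(1+a)*t)*(a*t)" using assms
    by (intro mult_right_mono) auto
  then show "(1+a)*a*t*(1+t) \<le> 8*(1+(1+a)*t)*((1+(1+a)*t)-(1+t))"
    by (simp add: algebra_simps)
qed (use assms in \<open>auto intro!: add_pos_pos mult_pos_pos\<close>)

lemma LR_alg0: fixes c y P q :: real assumes "0<y" "0<q" "q\<le>P" "0\<le>c" "c\<le>2*q" "1/y \<le> 2*q"
  shows "(c/y)/P^2 + (8/y)/P \<le> 20"
proof -
  have "c/y = c*(1/y)" by simp
  also have "\<dots> \<le> (2*q)*(2*q)" using assms by (intro mult_mono) auto
  also have "\<dots> = 4*(q*q)" by simp
  also have "\<dots> \<le> 4*(P*P)" using assms by (intro mult_left_mono mult_mono) auto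
  also have "\<dots> = 4*P^2" by (simp add: power2_eq_square)
  finally have "(c/y)/P^2 \<le> 4" using assms by (simp add: field_simps)
  moreover have "(8/y)/P \<le> 16" 
  proof -
    have "8/y = 8*(1/y)" by simp
    also have "\<dots> \<le> 16*q" using assms by simp
    also have "\<dots> \<le> 16*P" using assms by simp
    finally show ?thesis using assms by (simp add: field_simps)
  qed
  ultimately show ?thesis by simp
qed

lemma LR_alg: fixes a t y :: real assumes "0<a" "a<1" "0<t" "t<1" "0<y" "y*(1+t) \<ge> 1/2"
  shows "((1+a)*a*t/y)/(1+(1+a)*t)^2 + (8/y)/(1+(1+a)*t) \<le> 20"
proof (rule LR_alg0)
  have "(1+a)*a \<le> 2*1" using assms by (intro mult_mono) auto
  then have "(1+a)*a*t \<le> 2*t" using assms by (intro mult_right_mono) auto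
  moreover have "2*t \<le> 2*(1+t)" by simp
  ultimately show "(1+a)*a*t \<le> 2*(1+t)" by (rule order_trans)
  show "1/y \<le> 2*(1+t)" using assms by (simp add: field_simps)
qed (use assms in \<open>auto intro!: add_pos_pos mult_pos_pos mult_nonneg_nonneg\<close>)


context prm begin

lemma left_nf: assumes "0<y" "y<1/2"
  defines "t \<equiv> (2*y) powr a"
  shows "0 < t" "t < 1" "Tmap a b y = y*(1+t)" "dT y = 1+(1+a)*t" "d2T y = (1+a)*a*t/y"
    "fleft a y = y*(1+t)"
proof -
  show "0<t" using assms by simp
  show "t<1" unfolding t_def using assms a0 powr_less_mono2[of a "2*y" 1] by auto
  show "Tmap a b y = y*(1+t)" "fleft a y = y*(1+t)" using assms T_left' F_eq by auto
  show "dT y = 1+(1+a)*t" "d2T y = (1+a)*a*t/y" using assms by (auto simp: dT_def d2T_def)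
qed

lemma right_nf: assumes "1/2<y" "y<1"
  defines "u \<equiv> 2*y-1"
  defines "w \<equiv> u powr b"
  shows "0<u" "u<1" "0<w" "w<1" "Tmap a b y = w" "dT y = 2*b*w/u" "d2T y / (dT y)^2 = (b-1)/(b*w)"
proof -
  show u0: "0<u" "u<1" using assms by auto
  show "0<w" using u0 by (simp add: w_def)
  show "w<1" unfolding w_def using u0 b1 powr_less_mono2[of b u 1] by auto
  show "Tmap a b y = w" using assms T_right by simp
  have e1: "u powr (b-1) = w/u" using u0 by (simp add: w_def powr_diff)
  have e2: "u powr (b-2) = w/u^2" using u0 by (simp add: w_def powr_diff power2_eq_square)
  show dt: "dT y = 2*b*w/u" using assms e1 by (simp add: dT_def u_def)
  have "d2T y = 4*b*(b-1)*w/u^2" using assms e2 by (simp add: d2T_def u_def)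
  then have "d2T y / (dT y)^2 = (4*b*(b-1)*w/u^2) / (2*b*w/u)^2" using dt by simp
  also have "\<dots> = (b-1)/(b*w)" using u0 b1 \<open>0<w\<close>
    by (simp add: field_simps power2_eq_square)
  finally show "d2T y / (dT y)^2 = (b-1)/(b*w)" .
qed

lemma dT_ge2_right: assumes "0<u" "u<1" "u powr b \<ge> 1/2"
  shows "2*b*(u powr b)/u \<ge> 2"
proof -
  have "u powr (b-1) = (u powr b) powr ((b-1)/b)" using assms b1 by (simp add: powr_powr)
  also have "\<dots> \<ge> (1/2) powr ((b-1)/b)" using assms b1 by (intro powr_mono2) auto
  finally have h: "u powr (b-1) \<ge> (1/2) powr ((b-1)/b)" .
  have "(b-1)/b = 1 - 1/b" using b1 by (simp add: field_simps)
  then have "(1/2) powr ((b-1)/b) = (1/2::real) powr 1 / (1/2) powr (1/b)"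
    by (simp only: powr_diff)
  also have "(1/2::real) powr (1/b) = 1 / 2 powr (1/b)" by (simp add: powr_divide)
  finally have "(1/2) powr ((b-1)/b) = 2 powr (1/b) / 2" by simp
  with h have "2*b*u powr (b-1) \<ge> 2*b*(2 powr (1/b)/2)" using b1 by (intro mult_left_mono) auto
  then have "2*b*u powr (b-1) \<ge> 2" using two_le_b2[OF b1] by simp
  moreover have "u powr (b-1) = u powr b / u" using assms by (simp add: powr_diff)
  ultimately show ?thesis by simp
qed

lemma u_small: assumes "0<u" "u<1" "u powr b < 1/2"
  shows "b/u \<ge> 2"
proof -
  have "u = (u powr b) powr (1/b)" using assms b1 by (simp add: powr_powr)
  also have "\<dots> \<le> (1/2) powr (1/b)" using assms b1 by (intro powr_mono2) auto
  also have "\<dots> = 1 / 2 powr (1/b)" by (simp add: powr_divide)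
  finally have "u * 2 powr (1/b) \<le> 1" by (simp add: field_simps)
  then have "b * 2 powr (1/b) \<le> b/u" using assms b1 by (simp add: field_simps)
  then show ?thesis using two_le_b2[OF b1] by simp
qed

definition Phi :: "real \<Rightarrow> real" where "Phi y = (if y < 1/2 then 8/y else 20)"

lemma dT_pos: "0<y \<Longrightarrow> y<1 \<Longrightarrow> y \<noteq> 1/2 \<Longrightarrow> dT y > 0"
  using b1 a0 by (auto simp: dT_def intro!: add_pos_nonneg mult_nonneg_nonneg)

lemma sig_step: assumes "0<y" "y<1" "y \<noteq> 1/2"
  shows "d2T y / (dT y)^2 + Phi y / dT y \<le> Phi (Tmap a b y)"
proof (cases "y < 1/2")
  case True
  define t where "t = (2*y) powr a"
  note nf = left_nf[OF \<open>0<y\<close> True, folded t_def]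
  have lhs: "d2T y / (dT y)^2 + Phi y / dT y = ((1+a)*a*t/y)/(1+(1+a)*t)^2 + (8/y)/(1+(1+a)*t)"
    using nf True by (simp add: Phi_def)
  show ?thesis
  proof (cases "y*(1+t) < 1/2")
    case True2: True
    show ?thesis unfolding lhs using nf True2 LL_alg[of a t y] a0 a1 \<open>0<y\<close> by (simp add: Phi_def)
  next
    case False2: False
    show ?thesis unfolding lhs using nf False2 LR_alg[of a t y] a0 a1 \<open>0<y\<close> by (simp add: Phi_def)
  qed
next
  case False
  then have y: "1/2 < y" using assms by auto
  define u where "u = 2*y-1"
  define w where "w = u powr b"
  note nf = right_nf[OF y \<open>y<1\<close>, folded u_def, folded w_def]
  have lhs: "d2T y / (dT y)^2 + Phi y / dT y = (b-1)/(b*w) + 20/(2*b*w/u)"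
    using nf y by (simp add: Phi_def)
  show ?thesis
  proof (cases "w < 1/2")
    case True
    show ?thesis unfolding lhs using RL_alg[of b u w] nf True b1 by (simp add: Phi_def w_def)
  next
    case False
    have g2: "2*b*w/u \<ge> 2" using dT_ge2_right[of u] nf False by (simp add: w_def)
    show ?thesis unfolding lhs using RR_alg[of b w "2*b*w/u"] g2 nf False b1 by (simp add: Phi_def)
  qed
qed

end


context prm begin

lemma T_maps: assumes "0<y" "y<1" "y \<noteq> 1/2" shows "0 < Tmap a b y" "Tmap a b y < 1"
proof -
  have "0 < Tmap a b y \<and> Tmap a b y < 1"
  proof (cases "y<1/2")
    case True
    define t where "t = (2*y) powr a"
    note nf = left_nf[OF \<open>0<y\<close> True, folded t_def]
    have "y*(1+t) < y*2" using nf assms by (intro mult_strict_left_mono) auto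
    then have "y*(1+t) < 1" using True by linarith
    moreover have "0 < y*(1+t)" using nf assms by simp
    ultimately show ?thesis using nf by simp
  next
    case False
    then have y: "1/2<y" using assms by auto
    show ?thesis using right_nf[OF y \<open>y<1\<close>] by auto
  qed
  then show "0 < Tmap a b y" "Tmap a b y < 1" by auto
qed

lemma T_0: "Tmap a b 0 = 0" by (simp add: Tmap_def)
lemma T_half: "Tmap a b (1/2) = 0" using b1 by (simp add: Tmap_def)

lemma orbit_cases: assumes "0<x" "x<1"
  shows "(TT m x \<in> {0<..<1} \<and> good m x) \<or> TT m x = 0"
proof (induction m)
  case 0 then show ?case using assms by (simp add: good_def)
next
  case (Suc m)
  then show ?case
  proof
    assume h: "TT m x \<in> {0<..<1} \<and> good m x"
    show ?thesis
    proof (cases "TT m x = 1/2")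
      case True
      then have "Tmap a b (TT m x) = 0" using T_half by metis
      then show ?thesis by simp
    next
      case False
      then show ?thesis using h T_maps[of "TT m x"] by (auto simp: good_Suc)
    qed
  next
    assume "TT m x = 0" then show ?thesis by (simp add: T_0)
  qed
qed

lemma orbit_pos: assumes "0<x" "x<1" "TT m x > 0" shows "good m x" "TT m x < 1"
  using orbit_cases[OF assms(1,2), of m] assms(3) by auto

lemma sig_inv: assumes "0<x" "good m x"
  shows "E m x / (D m x)^2 \<le> Phi (TT m x) \<and> D m x > 0"
  using assms(2)
proof (induction m)
  case 0 then show ?case using assms by (simp add: Phi_def)
next
  case (Suc m)
  then have gm: "good m x" and S: "TT m x \<in> {0<..<1} - {1/2}" by (auto simp: good_Suc)
  then have IH: "E m x / (D m x)^2 \<le> Phi (TT m x)" "D m x > 0" using Suc.IH by auto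
  define y where "y = TT m x"
  have dpos: "dT y > 0" using S dT_pos unfolding y_def by auto
  have "E (Suc m) x / (D (Suc m) x)^2 = d2T y / (dT y)^2 + (E m x / (D m x)^2) / dT y"
    using dpos IH(2) by (simp add: y_def field_simps power2_eq_square)
  also have "\<dots> \<le> d2T y / (dT y)^2 + Phi y / dT y"
    using IH dpos by (intro add_left_mono divide_right_mono) (auto simp: y_def)
  also have "\<dots> \<le> Phi (Tmap a b y)" using S sig_step unfolding y_def by auto
  finally show ?case using dpos IH(2) by (simp add: y_def)
qed

end


lemma powA_lower: fixes a t :: real assumes "0<a" "0\<le>t" "t\<le>1"
  shows "(1+t) powr a \<ge> 1 + a*t/2"
proof -
  have l: "ln (1+t) \<ge> t/(1+t)"
  proof -
    have "ln (1/(1+t)) \<le> 1/(1+t) - 1" using assms by (intro ln_le_minus_one) auto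
    then show ?thesis using assms by (simp add: ln_div field_simps)
  qed
  have "t/(1+t) \<ge> t/2" using assms by (intro divide_left_mono) auto
  with l have "ln (1+t) \<ge> t/2" by linarith
  then have "a * ln (1+t) \<ge> a*(t/2)" using assms by (intro mult_left_mono) auto
  moreover have "(1+t) powr a = exp (a * ln (1+t))" using assms by (simp add: powr_def)
  moreover have "exp (a * ln (1+t)) \<ge> 1 + a * ln (1+t)" by (rule exp_ge_add_one_self)
  ultimately show ?thesis by linarith
qed

lemma powA_upper: fixes a t :: real assumes "0<a" "a<1" "0\<le>t"
  shows "(1+t) powr a \<le> 1 + a*t"
proof -
  have "(1+t) powr a * 1 powr (1-a) \<le> a*(1+t) + (1-a)*1"
    using assms by (intro Youngs_inequality_0) auto
  then show ?thesis by (simp add: algebra_simps)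
qed

context prm begin

abbreviation FF where "FF \<equiv> fleft a"
definition tt :: "real \<Rightarrow> real" where "tt z = (2*z) powr a"
definition dF :: "real \<Rightarrow> real" where "dF z = 1 + (1+a) * tt z"

lemma F_nf: assumes "0<z" "z<1/2"
  shows "0 < tt z" "tt z < 1" "FF z = z*(1+tt z)" "0 < FF z" "FF z < 1" "dT z = dF z"
    "Tmap a b z = FF z"
  using left_nf[OF assms] T_maps[of z] assms T_left'[of z]
  by (auto simp: tt_def dF_def)

lemma decr: assumes "0<z" "z<1/2"
  shows "(FF z) powr (-a) \<le> z powr (-a) - a/4"
proof -
  note nf = F_nf[OF assms]
  define t where "t = tt z"
  have t01: "0<t" "t<1" using nf by (auto simp: t_def)
  have zt: "z powr (-a) * t = 2 powr a" using assms
    by (simp add: t_def tt_def powr_mult powr_minus field_simps)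
  have "(FF z) powr (-a) = z powr (-a) * (1+t) powr (-a)"
    using nf assms t01 by (simp add: t_def powr_mult)
  also have "(1+t) powr (-a) = 1 / (1+t) powr a" by (simp add: powr_minus_divide)
  also have "\<dots> \<le> 1 / (1 + a*t/2)"
  proof -
    have p1: "0 < 1 + a*t/2" using t01 a0 by (simp add: add_pos_nonneg)
    have p2: "0 < (1+t) powr a" using t01 by simp
    show ?thesis using powA_lower[of a t] t01 a0 p1 p2 by (intro divide_left_mono) auto
  qed
  finally have h: "(FF z) powr (-a) \<le> z powr (-a) * (1 / (1 + a*t/2))"
    using assms by (simp add: mult_left_mono)
  have "1 / (1 + a*t/2) \<le> 1 - a*t/4"
  proof -
    have "a*t \<le> 1" using a1 t01 a0 by (smt (verit) mult_le_one)
    then have "(1 - a*t/4) * (1 + a*t/2) \<ge> 1"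
      using a0 t01 by (simp add: algebra_simps power2_eq_square)
    moreover have "0 < 1 + a*t/2" using a0 t01 by (simp add: add_pos_nonneg)
    ultimately show ?thesis by (simp add: pos_divide_le_eq)
  qed
  then have "z powr (-a) * (1 / (1 + a*t/2)) \<le> z powr (-a) * (1 - a*t/4)"
    by (intro mult_left_mono) auto
  also have "\<dots> = z powr (-a) - a/4 * (z powr (-a) * t)" by (simp add: algebra_simps)
  also have "\<dots> = z powr (-a) - a/4 * 2 powr a" using zt by simp
  also have "\<dots> \<le> z powr (-a) - a/4"
  proof -
    have "2 powr a \<ge> 1" using a0 by (intro ge_one_powr_ge_zero) auto
    then have "a/4 * 1 \<le> a/4 * 2 powr a" using a0 by (intro mult_left_mono) auto
    then show ?thesis by simp
  qed
  finally show ?thesis using h by simp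
qed


lemma iterF: assumes "0<z" "z<1/2"
  shows "(\<forall>j<n. (FF^^j) z < 1/2) \<Longrightarrow> 0 < (FF^^n) z \<and> (FF^^n) z < 1 \<and>
     ((FF^^n) z) powr (-a) \<le> z powr (-a) - n*a/4"
proof (induction n)
  case 0 then show ?case using assms by simp
next
  case (Suc n)
  then have IH: "0 < (FF^^n) z" "(FF^^n) z < 1" "((FF^^n) z) powr (-a) \<le> z powr (-a) - n*a/4"
    and h: "(FF^^n) z < 1/2" by auto
  note nf = F_nf[OF IH(1) h]
  have "(FF ((FF^^n) z)) powr (-a) \<le> ((FF^^n) z) powr (-a) - a/4" using decr[OF IH(1) h] .
  moreover have "real (Suc n) * a/4 = real n*a/4 + a/4" by (simp add: algebra_simps)
  ultimately have "(FF ((FF^^n) z)) powr (-a) \<le> z powr (-a) - real (Suc n)*a/4"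
    using IH(3) by linarith
  moreover have e: "(FF^^Suc n) z = FF ((FF^^n) z)" by simp
  ultimately show ?case unfolding e using nf(4) nf(5) by blast
qed

lemma escape: assumes "0<z" "z<1/2" shows "\<exists>n. (FF^^n) z \<ge> 1/2"
proof (rule ccontr)
  assume "\<not> ?thesis"
  then have all: "\<forall>j. (FF^^j) z < 1/2" by (simp add: not_le)
  define n where "n = nat \<lceil>4 * z powr (-a) / a\<rceil> + 1"
  have "real n > 4 * z powr (-a) / a" unfolding n_def by linarith
  then have "real n * a > 4 * z powr (-a)" using a0 by (simp add: field_simps)
  moreover have "0 < ((FF^^n) z) powr (-a)" using iterF[OF assms, of n] all by simp
  moreover have "((FF^^n) z) powr (-a) \<le> z powr (-a) - n*a/4" using iterF[OF assms, of n] all by simp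
  ultimately show False by simp
qed

definition kesc :: "real \<Rightarrow> nat" where "kesc z = (LEAST n. (FF^^n) z \<ge> 1/2)"

lemma kesc_props: assumes "0<z" "z<1/2"
  shows "kesc z \<ge> 1" "(FF^^kesc z) z \<ge> 1/2" "\<And>j. j < kesc z \<Longrightarrow> (FF^^j) z < 1/2"
    "(FF^^kesc z) z < 1" "real (kesc z) \<le> (1+4/a) * z powr (-a)"
proof -
  obtain n where n: "(FF^^n) z \<ge> 1/2" using escape[OF assms] by blast
  show k: "(FF^^kesc z) z \<ge> 1/2" unfolding kesc_def using n by (rule LeastI)
  show lt: "\<And>j. j < kesc z \<Longrightarrow> (FF^^j) z < 1/2"
  proof -
    fix j assume "j < kesc z"
    then have "\<not> (FF^^j) z \<ge> 1/2" unfolding kesc_def by (rule not_less_Least)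
    then show "(FF^^j) z < 1/2" by simp
  qed
  show k1: "kesc z \<ge> 1" using k assms by (cases "kesc z") auto
  show "(FF^^kesc z) z < 1" using iterF[OF assms, of "kesc z"] lt by auto
  define k where "k = kesc z"
  have "0 < (FF^^(k-1)) z" using iterF[OF assms, of "k-1"] lt k1 by (simp add: k_def)
  then have "0 < ((FF^^(k-1)) z) powr (-a)" by simp
  moreover have "((FF^^(k-1)) z) powr (-a) \<le> z powr (-a) - real (k-1)*a/4"
    using iterF[OF assms, of "k-1"] lt k1 by (simp add: k_def)
  ultimately have "real (k-1) * a < 4 * z powr (-a)" by linarith
  then have "real (k-1) < 4 * z powr (-a) / a" using a0 by (simp add: field_simps)
  then have kk: "real k \<le> 1 + 4 * z powr (-a) / a" using k1 unfolding k_def by linarith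
  have z1: "z powr (-a) \<ge> 1" using assms a0 powr_mono2'[of "-a" z 1] by simp
  have "1 + 4 * z powr (-a) / a \<le> z powr (-a) + 4/a * z powr (-a)" using z1 by simp
  also have "\<dots> = (1+4/a) * z powr (-a)" by (simp add: algebra_simps)
  finally show "real (kesc z) \<le> (1+4/a) * z powr (-a)" using kk by (simp add: k_def)
qed

definition psi :: "real \<Rightarrow> real" where
  "psi z = (if z < 1/2 then (\<Prod>j<kesc z. dF ((FF^^j) z)) else 1)"

lemma psi_shift: assumes "0<z" "z<1/2" "FF z < 1/2"
  shows "kesc z = Suc (kesc (FF z))" "psi z = dF z * psi (FF z)"
proof -
  obtain n where n: "(FF^^n) z \<ge> 1/2" using escape[OF assms(1,2)] by blast
  have "kesc z = Suc (LEAST m. (FF^^(Suc m)) z \<ge> 1/2)"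
    unfolding kesc_def using n assms by (intro Least_Suc) auto
  also have "(\<lambda>m. (FF^^(Suc m)) z) = (\<lambda>m. (FF^^m) (FF z))"
    by (simp add: funpow_Suc_right del: funpow.simps)
  finally show k: "kesc z = Suc (kesc (FF z))" by (simp add: kesc_def)
  have "psi z = (\<Prod>j<Suc (kesc (FF z)). dF ((FF^^j) z))" using assms k by (simp add: psi_def)
  also have "\<dots> = dF z * (\<Prod>j<kesc (FF z). dF ((FF^^(Suc j)) z))"
    by (subst prod.lessThan_Suc_shift) simp
  also have "(\<lambda>j. (FF^^(Suc j)) z) = (\<lambda>j. (FF^^j) (FF z))"
    by (simp add: funpow_Suc_right del: funpow.simps)
  finally show "psi z = dF z * psi (FF z)" using assms by (simp add: psi_def)
qed

lemma psi_LR: assumes "0<z" "z<1/2" "FF z \<ge> 1/2"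
  shows "kesc z = 1" "psi z = dF z"
proof -
  have "\<And>y. 1/2 \<le> (FF^^y) z \<Longrightarrow> 1 \<le> y"
  proof -
    fix y assume "1/2 \<le> (FF^^y) z" then show "1 \<le> y" using assms by (cases y) auto
  qed
  then show k: "kesc z = 1" unfolding kesc_def
    using assms by (intro Least_equality) auto
  show "psi z = dF z" using assms k by (simp add: psi_def)
qed

lemma dF_ge1: "dF u \<ge> 1" using a0 by (simp add: dF_def tt_def)

lemma prod_lower: fixes W :: "real \<Rightarrow> real"
  assumes W: "\<And>y. 0<y \<Longrightarrow> y<1 \<Longrightarrow> W y > 0"
    and st: "\<And>y. 0<y \<Longrightarrow> y<1/2 \<Longrightarrow> W y / W (FF y) \<le> dF y"
    and z: "0<z" "z<1/2"
  shows "(\<forall>j<n. (FF^^j) z < 1/2) \<Longrightarrow> W z / W ((FF^^n) z) \<le> (\<Prod>j<n. dF ((FF^^j) z))"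
proof (induction n)
  case 0 then show ?case using W[of z] z by simp
next
  case (Suc n)
  then have IH: "W z / W ((FF^^n) z) \<le> (\<Prod>j<n. dF ((FF^^j) z))" and h: "(FF^^n) z < 1/2" by auto
  have yn: "0 < (FF^^n) z" "(FF^^n) z < 1" using iterF[OF z, of n] Suc.prems by auto
  define y where "y = (FF^^n) z"
  have ny: "0 < FF y" "FF y < 1" using F_nf[of y] yn h by (auto simp: y_def)
  have "W z / W ((FF^^Suc n) z) = (W z / W y) * (W y / W (FF y))"
    using W[of y] yn by (simp add: y_def)
  also have "\<dots> \<le> (\<Prod>j<n. dF ((FF^^j) z)) * dF y"
    using IH st[of y] yn h W[of z] W[of y] W[of "FF y"] z ny dF_ge1
    by (intro mult_mono prod_nonneg) (auto simp: y_def intro: order_trans[OF zero_le_one])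
  finally show ?case by (simp add: y_def)
qed

lemma dF_step1: assumes "0<y" "y<1/2" shows "(1/y) / (1 / FF y) \<le> dF y"
  using F_nf[OF assms] assms a0 by (simp add: dF_def)

lemma dF_step2: assumes "0<y" "y<1/2"
  shows "(y powr (-(1+a)) * exp (2 * tt y)) / ((FF y) powr (-(1+a)) * exp (2 * tt (FF y))) \<le> dF y"
proof -
  note nf = F_nf[OF assms]
  define t where "t = tt y"
  have t01: "0<t" "t<1" using nf by (auto simp: t_def)
  have t': "tt (FF y) = t * (1+t) powr a"
    using nf assms t01 by (simp add: tt_def t_def powr_mult)
  have p1: "(FF y) powr (-(1+a)) = y powr (-(1+a)) * (1+t) powr (-(1+a))"
    using nf assms t01 by (simp add: t_def powr_mult)
  have p2: "(1+t) powr (-(1+a)) = 1 / (1+t) powr (1+a)" by (rule powr_minus_divide)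
  have p3: "exp (2 * tt (FF y)) = exp (2*t) * exp (2 * (tt (FF y) - t))"
    by (simp add: mult_exp_exp)
  have pos: "y powr (-(1+a)) > 0" "(1+t) powr (1+a) > 0" using assms t01 by auto
  have lhs: "(y powr (-(1+a)) * exp (2 * tt y)) / ((FF y) powr (-(1+a)) * exp (2 * tt (FF y)))
     = (1+t) powr (1+a) / exp (2 * (tt (FF y) - t))"
    unfolding p1 p2 p3 using pos by (simp add: t_def field_simps)
  have d: "tt (FF y) - t \<ge> t * (a*t/2)"
  proof -
    have "t * (1+t) powr a \<ge> t * (1 + a*t/2)" using powA_lower[of a t] a0 t01
      by (intro mult_left_mono) auto
    then show ?thesis using t' by (simp add: algebra_simps)
  qed
  have e: "exp (2 * (tt (FF y) - t)) \<ge> 1 + a*t^2"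
  proof -
    have "1 + 2 * (tt (FF y) - t) \<le> exp (2 * (tt (FF y) - t))" by (rule exp_ge_add_one_self)
    moreover have "2 * (tt (FF y) - t) \<ge> a*t^2" using d by (simp add: power2_eq_square algebra_simps)
    ultimately show ?thesis by linarith
  qed
  have "(1+t) powr (1+a) = (1+t) * (1+t) powr a" using t01 by (simp add: powr_add)
  also have "\<dots> \<le> (1+t) * (1+a*t)" using powA_upper[of a t] a0 a1 t01
    by (intro mult_left_mono) auto
  also have "\<dots> \<le> (1+(1+a)*t) * (1+a*t^2)"
  proof -
    have "0 \<le> a*(1+a)*t^3" using a0 t01 by simp
    then show ?thesis by (simp add: algebra_simps power2_eq_square power3_eq_cube)
  qed
  also have "\<dots> \<le> (1+(1+a)*t) * exp (2 * (tt (FF y) - t))"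
    using e a0 t01 by (intro mult_left_mono) auto
  also have "1+(1+a)*t = dF y" by (simp add: dF_def t_def)
  finally show ?thesis unfolding lhs by (simp add: pos_divide_le_eq)
qed

end

context prm begin

lemma orbitF: assumes "0<z" "z<1/2" "j \<le> kesc z"
  shows "0 < (FF^^j) z" "(FF^^j) z < 1"
  using iterF[OF assms(1,2), of j] kesc_props(3)[OF assms(1,2)] assms(3) by auto

lemma psi_lower1: assumes "0<z" "z<1/2" shows "psi z \<ge> 1/(2*z)"
proof -
  define k where "k = kesc z"
  have "(1/z) / (1 / (FF^^k) z) \<le> (\<Prod>j<k. dF ((FF^^j) z))"
    using prod_lower[of "\<lambda>y. 1/y", OF _ dF_step1 assms] kesc_props(3)[OF assms] by (auto simp: k_def)
  moreover have "(1/z) / (1 / (FF^^k) z) = (FF^^k) z / z" by simp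
  moreover have "(FF^^k) z / z \<ge> (1/2) / z" using kesc_props(2)[OF assms] assms
    by (intro divide_right_mono) (auto simp: k_def)
  ultimately show ?thesis using assms by (simp add: psi_def k_def)
qed

lemma psi_lower2: assumes "0<z" "z<1/2" shows "psi z \<ge> exp (-4) / 4 * z powr (-(1+a))"
proof -
  define k where "k = kesc z"
  define W where "W = (\<lambda>y::real. y powr (-(1+a)) * exp (2 * tt y))"
  define yk where "yk = (FF^^k) z"
  have yk: "1/2 \<le> yk" "yk < 1" using kesc_props[OF assms] by (auto simp: yk_def k_def)
  have "W z / W yk \<le> (\<Prod>j<k. dF ((FF^^j) z))"
    unfolding W_def yk_def
    using prod_lower[of "\<lambda>y. y powr (-(1+a)) * exp (2 * tt y)", OF _ dF_step2 assms] kesc_props(3)[OF assms]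
    by (auto simp: k_def)
  moreover have "W z \<ge> z powr (-(1+a))"
  proof -
    have "exp (2 * tt z) \<ge> 1" using assms by (simp add: tt_def)
    then have "z powr (-(1+a)) * 1 \<le> z powr (-(1+a)) * exp (2 * tt z)" by (intro mult_left_mono) auto
    then show ?thesis by (simp add: W_def)
  qed
  moreover have "W yk \<le> 4 * exp 4"
  proof -
    have "yk powr (-(1+a)) \<le> (1/2) powr (-(1+a))" using yk a0 by (intro powr_mono2') auto
    also have "(1/2::real) powr (-(1+a)) = 2 powr (1+a)"
    proof -
      have "(1/2::real) powr (-(1+a)) = inverse ((1/2) powr (1+a))" by (rule powr_minus)
      also have "(1/2::real) powr (1+a) = 1 / 2 powr (1+a)" by (simp add: powr_divide)
      finally show ?thesis by simp
    qed
    also have "\<dots> \<le> 2 powr 2" using a1 by (intro powr_mono) auto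
    finally have h1: "yk powr (-(1+a)) \<le> 4" by simp
    have "tt yk \<le> 2 powr a" unfolding tt_def using yk a0 by (intro powr_mono2) auto
    also have "\<dots> \<le> 2 powr 1" using a1 by (intro powr_mono) auto
    finally have "exp (2 * tt yk) \<le> exp 4" by simp
    with h1 show ?thesis unfolding W_def by (intro mult_mono) auto
  qed
  moreover have "W yk > 0" using yk by (simp add: W_def)
  moreover have "W z > 0" using assms by (simp add: W_def)
  ultimately have "z powr (-(1+a)) / (4 * exp 4) \<le> W z / W yk"
    by (intro frac_le) auto
  also have "\<dots> \<le> (\<Prod>j<k. dF ((FF^^j) z))" by fact
  finally have "z powr (-(1+a)) / (4 * exp 4) \<le> (\<Prod>j<k. dF ((FF^^j) z))" .
  then show ?thesis using assms by (simp add: psi_def k_def exp_minus field_simps)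
qed

lemma psi_upper: assumes "0<z" "z<1/2" shows "psi z \<le> 3 ^ kesc z"
proof -
  have "(\<Prod>j<kesc z. dF ((FF^^j) z)) \<le> 3 ^ kesc z"
  proof (rule prod_le_power)
    fix j assume "j \<in> {..<kesc z}"
    then have j: "j < kesc z" by simp
    have "0 < (FF^^j) z" using orbitF[OF assms, of j] j by simp
    then have "tt ((FF^^j) z) < 1" using F_nf kesc_props(3)[OF assms j] by blast
    moreover have "0 \<le> tt ((FF^^j) z)" by (simp add: tt_def)
    ultimately have "(1+a) * tt ((FF^^j) z) \<le> 2 * 1" using a1 by (intro mult_mono) auto
    then show "0 \<le> dF ((FF^^j) z) \<and> dF ((FF^^j) z) \<le> 3"
      using dF_ge1[of "(FF^^j) z"] by (simp add: dF_def)
  qed auto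
  then show ?thesis using assms by (simp add: psi_def)
qed

lemma psi_pos: "0 < z \<Longrightarrow> psi z > 0"
  using dF_ge1 by (auto simp: psi_def intro!: prod_pos intro: less_le_trans[OF zero_less_one])

end

context prm begin

definition pp where "pp = 1 + 1/(a*b)"
definition cc where "cc = exp (-4) / 2 * (1+4/a) powr (-pp)"
definition gam where "gam = cc powr (1/pp)"
definition N0 where "N0 = 2/gam"
definition BB where "BB = max (4/gam) ((1+N0)/(2 powr (1/pp) - 1))"

lemma pp_gt1: "pp > 1" using a0 b1 by (simp add: pp_def)
lemma a_pp: "a * pp = a + 1/b" using a0 b1 by (simp add: pp_def field_simps)
lemma cc_pos: "cc > 0"
proof -
  have "1+4/a > 0" using a0 by (simp add: add_pos_pos)
  then show ?thesis by (simp add: cc_def)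
qed
lemma gam_pos: "gam > 0" using cc_pos by (simp add: gam_def)
lemma gam_pp: "gam powr pp = cc" using cc_pos pp_gt1 by (simp add: gam_def powr_powr)
lemma N0_pos: "N0 > 0" using gam_pos by (simp add: N0_def)
lemma q_gt1: "2 powr (1/pp) > 1"
  using powr_less_mono[of 0 "1/pp" 2] pp_gt1 by simp
lemma BB_pos: "BB > 0" using gam_pos by (simp add: BB_def less_max_iff_disj)
lemma BB_ge1: "BB \<ge> 4/gam" "BB \<ge> (1+N0)/(2 powr (1/pp) - 1)" by (auto simp: BB_def)

lemma key_B: fixes k :: nat
  shows "((1+BB+real k)/BB) powr pp \<le> 2 \<or> ((1+BB+real k)/BB) powr pp \<le> cc * (real k) powr pp"
proof (cases "real k \<le> N0")
  case True
  define q where "q = 2 powr (1/pp)"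
  have q1: "q > 1" using q_gt1 by (simp add: q_def)
  have "(1+N0)/BB \<le> q - 1"
  proof -
    have "(1+N0)/(q-1) \<le> BB" using BB_ge1(2) by (simp add: q_def)
    then show ?thesis using q1 BB_pos by (simp add: field_simps)
  qed
  moreover have "(1+real k)/BB \<le> (1+N0)/BB" using True BB_pos by (intro divide_right_mono) auto
  moreover have "(1+BB+real k)/BB = 1 + (1+real k)/BB" using BB_pos by (simp add: field_simps)
  ultimately have "(1+BB+real k)/BB \<le> q" by linarith
  then have "((1+BB+real k)/BB) powr pp \<le> q powr pp" using BB_pos pp_gt1 by (intro powr_mono2) auto
  also have "q powr pp = 2" using pp_gt1 by (simp add: q_def powr_powr)
  finally show ?thesis by simp
next
  case False
  then have kN: "real k > N0" by simp
  then have k1: "real k \<ge> 1" using N0_pos by simp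
  have gk: "gam * real k > 2" using kN gam_pos by (simp add: N0_def field_simps)
  have "1/BB \<le> gam/4"
  proof -
    have "4/gam \<le> BB" by (rule BB_ge1(1))
    then show ?thesis using gam_pos BB_pos by (simp add: field_simps)
  qed
  then have "(1+real k) * (1/BB) \<le> (1+real k) * (gam/4)"
    using k1 by (intro mult_left_mono) auto
  also have "\<dots> \<le> (2*real k) * (gam/4)" using k1 gam_pos by (intro mult_right_mono) auto
  finally have "(1+real k)/BB \<le> (2*real k) * (gam/4)" by simp
  moreover have "(1+BB+real k)/BB = 1 + (1+real k)/BB" using BB_pos by (simp add: field_simps)
  moreover have "2*real k*(gam/4) = (gam*real k)/2" by simp
  ultimately have "(1+BB+real k)/BB \<le> gam * real k" using gk by linarith
  then have "((1+BB+real k)/BB) powr pp \<le> (gam * real k) powr pp"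
    using BB_pos pp_gt1 by (intro powr_mono2) auto
  also have "\<dots> = cc * real k powr pp" using gam_pos by (simp add: powr_mult gam_pp)
  finally show ?thesis by simp
qed

lemma ratio_le: assumes "0 \<le> j" "0 \<le> X"
  shows "(j+1+BB+X) powr pp \<le> ((1+BB+X)/BB) powr pp * (j+BB) powr pp"
proof -
  have "j+1+BB+X \<le> ((1+BB+X)/BB) * (j+BB)"
  proof -
    have "((1+BB+X)/BB) * (j+BB) = (j+1+BB+X) + j*(1+X)/BB" using BB_pos by (simp add: field_simps)
    moreover have "j*(1+X)/BB \<ge> 0" using assms BB_pos by simp
    ultimately show ?thesis by linarith
  qed
  then have "(j+1+BB+X) powr pp \<le> (((1+BB+X)/BB) * (j+BB)) powr pp"
    using assms BB_pos pp_gt1 by (intro powr_mono2) auto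
  also have "\<dots> = ((1+BB+X)/BB) powr pp * (j+BB) powr pp"
    using powr_mult[of "(1+BB+X)/BB" "j+BB" pp] assms BB_pos by simp
  finally show ?thesis .
qed

end

context prm begin

lemma G_bounds: assumes "1/2 < y" "y < 1" "Tmap a b y < 1/2"
  shows "dT y * psi (Tmap a b y) \<ge> 2" "dT y * psi (Tmap a b y) \<ge> cc * real (kesc (Tmap a b y)) powr pp"
proof -
  define u where "u = 2*y-1"
  define w where "w = u powr b"
  note nf = right_nf[OF assms(1,2), folded u_def, folded w_def]
  have Tw: "Tmap a b y = w" using nf by simp
  have w2: "w < 1/2" using assms Tw by simp
  have dt: "dT y = 2*b*w/u" using nf by simp
  have "psi w \<ge> 1/(2*w)" using psi_lower1[of w] nf w2 by simp
  then have "dT y * psi w \<ge> (2*b*w/u) * (1/(2*w))" unfolding dt using nf b1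
    by (intro mult_left_mono) auto
  moreover have "(2*b*w/u) * (1/(2*w)) = b/u" using nf by (simp add: field_simps)
  moreover have "b/u \<ge> 2" using u_small[of u] nf w2 by (simp add: w_def)
  ultimately show "dT y * psi (Tmap a b y) \<ge> 2" using Tw by simp
  define V where "V = (w powr (-a)) powr pp"
  have "psi w \<ge> exp (-4) / 4 * w powr (-(1+a))" using psi_lower2[of w] nf w2 by simp
  then have h1: "dT y * psi w \<ge> (2*b*w/u) * (exp (-4) / 4 * w powr (-(1+a)))" unfolding dt using nf b1
    by (intro mult_left_mono) auto
  have h2: "(2*b*w/u) * (exp (-4) / 4 * w powr (-(1+a))) = b * (exp (-4) / 2) * (w powr (-a) / u)"
  proof -
    have "w * w powr (-(1+a)) = w powr (-a)" using nf by (simp add: powr_add[symmetric] powr_mult_base)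
    then show ?thesis using nf by (simp add: field_simps)
  qed
  have h3: "w powr (-a) / u = V"
  proof -
    have u: "u = w powr (1/b)" using nf b1 by (simp add: w_def powr_powr)
    have "w powr (-a) / u = w powr (-a) * w powr (-(1/b))" using u nf by (simp add: powr_minus_divide)
    also have "\<dots> = w powr (-(a*pp))" using a_pp nf by (simp add: powr_add[symmetric])
    also have "\<dots> = V" by (simp add: V_def powr_powr)
    finally show ?thesis .
  qed
  have h4: "b * (exp (-4) / 2) * V \<ge> exp (-4) / 2 * V"
  proof -
    have "V \<ge> 0" by (simp add: V_def)
    then show ?thesis using b1 by (simp add: mult_right_mono)
  qed
  have h5: "cc * real (kesc w) powr pp \<le> exp (-4) / 2 * V"
  proof -
    have k: "real (kesc w) \<le> (1+4/a) * w powr (-a)" using kesc_props(5)[of w] nf w2 by simp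
    have c4: "1+4/a > 0" using a0 by (simp add: add_pos_pos)
    have "real (kesc w) powr pp \<le> ((1+4/a) * w powr (-a)) powr pp"
      using k pp_gt1 by (intro powr_mono2) auto
    also have "\<dots> = (1+4/a) powr pp * V" using c4 by (simp add: powr_mult V_def)
    finally have "cc * real (kesc w) powr pp \<le> cc * ((1+4/a) powr pp * V)"
      using cc_pos by (intro mult_left_mono) auto
    also have "\<dots> = exp (-4) / 2 * ((1+4/a) powr (-pp) * (1+4/a) powr pp) * V"
      by (simp add: cc_def)
    also have "(1+4/a) powr (-pp) * (1+4/a) powr pp = 1" using c4 by (simp add: powr_add[symmetric])
    finally show ?thesis by simp
  qed
  have "cc * real (kesc w) powr pp \<le> b * (exp (-4) / 2) * V" using h4 h5 by linarith
  also have "\<dots> = (2*b*w/u) * (exp (-4) / 4 * w powr (-(1+a)))" using h2 h3 by simp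
  also have "\<dots> \<le> dT y * psi w" using h1 by simp
  finally show "dT y * psi (Tmap a b y) \<ge> cc * real (kesc (Tmap a b y)) powr pp" using Tw by simp
qed

definition RR :: "real \<Rightarrow> real" where "RR y = (if y < 1/2 then BB + real (kesc y) else BB)"

lemma RR_pos: "RR y > 0" using BB_pos by (simp add: RR_def add_pos_nonneg)

lemma step_ineq: assumes "0<y" "y<1" "y \<noteq> 1/2" "0 \<le> j"
  shows "psi y * (j + 1 + RR (Tmap a b y)) powr pp \<le> dT y * psi (Tmap a b y) * (j + RR y) powr pp"
proof (cases "y < 1/2")
  case True
  note nf = F_nf[OF \<open>0<y\<close> True]
  show ?thesis
  proof (cases "FF y < 1/2")
    case True2: True
    have "psi y = dT y * psi (Tmap a b y)" using psi_shift[OF \<open>0<y\<close> True True2] nf by simp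
    moreover have "RR y = 1 + RR (Tmap a b y)" using psi_shift[OF \<open>0<y\<close> True True2] nf True True2
      by (simp add: RR_def)
    ultimately show ?thesis by (simp add: add.assoc)
  next
    case False2: False
    have "psi y = dT y * psi (Tmap a b y)" using psi_LR[OF \<open>0<y\<close> True] False2 nf
      by (simp add: psi_def)
    moreover have "RR y = 1 + RR (Tmap a b y)" using psi_LR[OF \<open>0<y\<close> True] False2 nf True
      by (simp add: RR_def)
    ultimately show ?thesis by (simp add: add.assoc)
  qed
next
  case False
  then have y: "1/2 < y" using assms by auto
  define u where "u = 2*y-1"
  define w where "w = u powr b"
  note nf = right_nf[OF y \<open>y<1\<close>, folded u_def, folded w_def]
  have psy: "psi y = 1" using y by (simp add: psi_def)
  have RRy: "RR y = BB" using y by (simp add: RR_def)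
  show ?thesis
  proof (cases "w < 1/2")
    case True
    define k where "k = kesc w"
    have RRw: "RR (Tmap a b y) = BB + real k" using nf True by (simp add: RR_def k_def)
    have G: "dT y * psi (Tmap a b y) \<ge> 2" "dT y * psi (Tmap a b y) \<ge> cc * real k powr pp"
      using G_bounds[OF y \<open>y<1\<close>] nf True by (auto simp: k_def)
    have "(j + 1 + RR (Tmap a b y)) powr pp = (j+1+BB+real k) powr pp" using RRw by (simp add: add.assoc)
    also have "\<dots> \<le> ((1+BB+real k)/BB) powr pp * (j+BB) powr pp"
      using ratio_le[of j "real k"] assms by simp
    also have "\<dots> \<le> dT y * psi (Tmap a b y) * (j+BB) powr pp"
      using key_B[of k] G by (intro mult_right_mono) auto
    finally show ?thesis using psy RRy by simp
  next
    case False
    have RRw: "RR (Tmap a b y) = BB" using nf False by (simp add: RR_def)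
    have psw: "psi (Tmap a b y) = 1" using nf False by (simp add: psi_def)
    have g2: "dT y \<ge> 2" using dT_ge2_right[of u] nf False by (simp add: w_def)
    have "(j + 1 + RR (Tmap a b y)) powr pp = (j+1+BB+real (0::nat)) powr pp" using RRw by (simp add: add.assoc)
    also have "\<dots> \<le> ((1+BB+real (0::nat))/BB) powr pp * (j+BB) powr pp"
      using ratio_le[of j "real (0::nat)"] assms by simp
    also have "\<dots> \<le> dT y * (j+BB) powr pp"
    proof -
      have "((1+BB+real (0::nat))/BB) powr pp \<le> 2" using key_B[of 0] pp_gt1 by auto
      then show ?thesis using g2 by (intro mult_right_mono) auto
    qed
    finally show ?thesis using psy RRy psw by simp
  qed
qed

end

context prm begin

definition c0 where "c0 = exp (-4) / 4 / (BB + 1 + 4/a) powr pp"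

lemma Bp_pos: "BB + 1 + 4/a > 0" using BB_pos a0 by (simp add: add_pos_pos)

lemma c0_pos: "c0 > 0" using Bp_pos by (simp add: c0_def)

lemma c0_le: assumes "0<y" "y<1" shows "c0 * (RR y) powr pp \<le> psi y"
proof (cases "y < 1/2")
  case False
  have "BB powr pp \<le> (BB + 1 + 4/a) powr pp" using BB_pos a0 pp_gt1 by (intro powr_mono2) auto
  then have "c0 * BB powr pp \<le> exp (-4) / 4"
    using Bp_pos by (simp add: c0_def field_simps)
  also have "\<dots> \<le> 1"
  proof -
    have "exp (-4::real) \<le> 1" by simp
    then show ?thesis by linarith
  qed
  finally show ?thesis using False by (simp add: RR_def psi_def)
next
  case True
  define B' where "B' = BB + 1 + 4/a"
  have z1: "y powr (-a) \<ge> 1" using assms a0 powr_mono2'[of "-a" y 1] by simp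
  have "RR y = BB + real (kesc y)" using True by (simp add: RR_def)
  also have "\<dots> \<le> BB * y powr (-a) + (1+4/a) * y powr (-a)"
  proof -
    have "BB * 1 \<le> BB * y powr (-a)" using z1 BB_pos by (intro mult_left_mono) auto
    then show ?thesis using kesc_props(5)[OF assms(1) True] by simp
  qed
  also have "\<dots> = B' * y powr (-a)" by (simp add: B'_def algebra_simps)
  finally have R1: "RR y \<le> B' * y powr (-a)" .
  have "(RR y) powr pp \<le> (B' * y powr (-a)) powr pp"
    using R1 RR_pos pp_gt1 by (intro powr_mono2) (auto simp: less_imp_le)
  also have "\<dots> = B' powr pp * y powr (-(a*pp))"
    using Bp_pos by (simp add: B'_def powr_mult powr_powr)
  also have "y powr (-(a*pp)) \<le> y powr (-(1+a))"
  proof -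
    have "1/b \<le> 1" using b1 by simp
    then have "a*pp \<le> 1+a" using a_pp by linarith
    then show ?thesis using assms by (intro powr_mono') auto
  qed
  finally have "(RR y) powr pp \<le> B' powr pp * y powr (-(1+a))"
    using Bp_pos by (simp add: B'_def mult_left_mono)
  then have "c0 * (RR y) powr pp \<le> c0 * (B' powr pp * y powr (-(1+a)))"
    using c0_pos by (intro mult_left_mono) auto
  also have "\<dots> = exp (-4) / 4 * y powr (-(1+a))" using Bp_pos by (simp add: c0_def B'_def)
  also have "\<dots> \<le> psi y" using psi_lower2[OF assms(1) True] .
  finally show ?thesis .
qed

lemma main_inv: assumes "0<x" "x<1" "good m x"
  shows "n \<le> m \<Longrightarrow> c0 * (real n + RR (TT n x)) powr pp \<le> D n x * psi (TT n x)"
proof (induction n)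
  case 0 then show ?case using c0_le[OF assms(1,2)] by simp
next
  case (Suc n)
  then have IH: "c0 * (real n + RR (TT n x)) powr pp \<le> D n x * psi (TT n x)" by simp
  have gS: "good (Suc n) x" using assms(3) Suc.prems by (auto simp: good_def)
  then have S: "TT n x \<in> {0<..<1} - {1/2}" and gn: "good n x" by (auto simp: good_Suc)
  define y where "y = TT n x"
  have Dpos: "D n x > 0" using sig_inv[OF assms(1) gn] by simp
  define A where "A = (real n + RR y) powr pp"
  have Apos: "A > 0" using RR_pos[of y] by (simp add: A_def add_nonneg_pos)
  have st: "psi y * (real n + 1 + RR (Tmap a b y)) powr pp \<le> dT y * psi (Tmap a b y) * A"
    using step_ineq[of y "real n"] S by (simp add: y_def A_def)
  have "c0 * A * (real n + 1 + RR (Tmap a b y)) powr pp \<le> (D n x * psi y) * (real n + 1 + RR (Tmap a b y)) powr pp"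
    using IH by (intro mult_right_mono) (auto simp: A_def y_def)
  also have "\<dots> = D n x * (psi y * (real n + 1 + RR (Tmap a b y)) powr pp)" by simp
  also have "\<dots> \<le> D n x * (dT y * psi (Tmap a b y) * A)" using st Dpos by (intro mult_left_mono) auto
  finally have "A * (c0 * (real n + 1 + RR (Tmap a b y)) powr pp) \<le> A * (D n x * dT y * psi (Tmap a b y))"
    by (simp add: algebra_simps)
  then have "c0 * (real n + 1 + RR (Tmap a b y)) powr pp \<le> D n x * dT y * psi (Tmap a b y)"
    using Apos by simp
  then show ?case by (simp add: y_def algebra_simps)
qed

end

context prm begin

lemma FF_mono: assumes "0 \<le> x" "x < y" shows "FF x < FF y"
proof -
  have "x powr a \<le> y powr a" using assms a0 by (intro powr_mono2) auto
  then have A: "1 + 2 powr a * x powr a \<le> 1 + 2 powr a * y powr a" by simp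
  have "x * (1 + 2 powr a * x powr a) \<le> x * (1 + 2 powr a * y powr a)"
    using A assms by (intro mult_left_mono) auto
  also have "\<dots> < y * (1 + 2 powr a * y powr a)"
    using assms by (intro mult_strict_right_mono) (auto intro: add_pos_nonneg)
  finally show ?thesis by (simp add: fleft_def)
qed

lemma FF_inj: "inj_on FF {0..1/2}"
proof (rule inj_onI)
  fix x y assume xy: "x \<in> {0..1/2}" "y \<in> {0..1/2}" "FF x = FF y"
  show "x = y"
  proof (rule ccontr)
    assume "x \<noteq> y"
    then have "x < y \<or> y < x" by auto
    then show False using FF_mono xy by fastforce
  qed
qed

lemma inv_props: assumes "0 < v" "v \<le> 1"
  shows "the_inv_into {0..1/2} FF v \<in> {0<..1/2}"
proof -
  have c: "continuous_on {v/2..1/2} FF" unfolding fleft_def using assms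
    by (intro continuous_intros) auto
  have lo: "FF (v/2) \<le> v"
  proof -
    have "v powr a \<le> 1" using assms a0 by (intro powr_le1) auto
    then have "FF (v/2) = v/2 * (1 + v powr a)" using assms F_eq[of "v/2"] by simp
    also have "\<dots> \<le> v/2 * 2" using \<open>v powr a \<le> 1\<close> assms by (intro mult_left_mono) auto
    finally show ?thesis by simp
  qed
  have hi: "v \<le> FF (1/2)" using assms by (simp add: fleft_def powr_mult[symmetric])
  obtain z where z: "v/2 \<le> z" "z \<le> 1/2" "FF z = v" using IVT'[OF lo hi _ c] assms by auto
  have "the_inv_into {0..1/2} FF v = z" using z assms by (intro the_inv_into_f_eq FF_inj) auto
  then show ?thesis using z assms by auto
qed

lemma bseq_pos: "0 < bseq a l"
proof -
  have "((the_inv_into {0..1/2} FF) ^^ l) (1/2) \<in> {0<..1}"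
  proof (induction l)
    case 0 then show ?case by simp
  next
    case (Suc l) then show ?case using inv_props by fastforce
  qed
  then show ?thesis by (simp add: bseq_def)
qed

lemma final: "\<exists>C1 C2. C1 > 0 \<and> C2 > 0 \<and>
    (\<forall>m::nat. m \<ge> 1 \<longrightarrow>
      (\<forall>x \<in> {0<..<1}. ((Tmap a b) ^^ m) x \<ge> bseq a l \<longrightarrow>
          1 / deriv ((Tmap a b) ^^ m) x \<le> C1 * real m powr (-1 - 1 / (a * b)) \<and>
          deriv (deriv ((Tmap a b) ^^ m)) x / (deriv ((Tmap a b) ^^ m) x)\<^sup>2 \<le> C2))"
proof -
  define bl where "bl = bseq a l"
  have bl: "bl > 0" using bseq_pos by (simp add: bl_def)
  define Pm where "Pm = 3 powr ((1+4/a) * bl powr (-a))"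
  have Pm1: "Pm \<ge> 1" unfolding Pm_def using a0 bl
    by (intro ge_one_powr_ge_zero mult_nonneg_nonneg) (auto intro: add_nonneg_nonneg)
  define C1 where "C1 = Pm / c0"
  define C2 where "C2 = max (8/bl) 20"
  have "C1 > 0" using Pm1 c0_pos by (simp add: C1_def)
  moreover have "C2 > 0" by (simp add: C2_def)
  moreover have "1 / deriv (TT m) x \<le> C1 * real m powr (-1 - 1 / (a * b)) \<and>
          deriv (deriv (TT m)) x / (deriv (TT m) x)\<^sup>2 \<le> C2"
    if m: "m \<ge> 1" and x: "x \<in> {0<..<1}" and xm: "TT m x \<ge> bl" for m x
  proof -
    have x01: "0<x" "x<1" using x by auto
    have xm0: "TT m x > 0" using xm bl by simp
    have g: "good m x" and xm1: "TT m x < 1" using orbit_pos[OF x01 xm0] by auto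
    have sg: "E m x / (D m x)^2 \<le> Phi (TT m x)" and Dp: "D m x > 0" using sig_inv[OF x01(1) g] by auto
    have d1: "deriv (TT m) x = D m x" using deriv_TT[OF g] .
    have d2: "deriv (deriv (TT m)) x = E m x" using deriv2_TT[OF g] .
    have "Phi (TT m x) \<le> C2"
    proof (cases "TT m x < 1/2")
      case True
      have "8 / TT m x \<le> 8 / bl" using xm bl by (intro divide_left_mono) auto
      then show ?thesis using True by (simp add: Phi_def C2_def)
    qed (simp add: Phi_def C2_def)
    with sg have part2: "deriv (deriv (TT m)) x / (deriv (TT m) x)\<^sup>2 \<le> C2" using d1 d2 by simp
    have mp: "real m powr pp > 0" using m by simp
    have "c0 * (real m + RR (TT m x)) powr pp \<le> D m x * psi (TT m x)"
      using main_inv[OF x01 g, of m] by simp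
    moreover have "c0 * real m powr pp \<le> c0 * (real m + RR (TT m x)) powr pp"
      using RR_pos[of "TT m x"] c0_pos pp_gt1 by (intro mult_left_mono powr_mono2) auto
    moreover have "psi (TT m x) \<le> Pm"
    proof (cases "TT m x < 1/2")
      case True
      have "psi (TT m x) \<le> 3 ^ kesc (TT m x)" using psi_upper[OF xm0 True] .
      also have "\<dots> = 3 powr real (kesc (TT m x))" by (simp add: powr_realpow)
      also have "\<dots> \<le> Pm" unfolding Pm_def
      proof (intro powr_mono)
        have "real (kesc (TT m x)) \<le> (1+4/a) * (TT m x) powr (-a)" using kesc_props(5)[OF xm0 True] .
        also have "\<dots> \<le> (1+4/a) * bl powr (-a)"
          using xm bl a0 by (intro mult_left_mono powr_mono2') (auto intro: add_nonneg_nonneg)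
        finally show "real (kesc (TT m x)) \<le> (1+4/a) * bl powr (-a)" .
      qed simp
      finally show ?thesis .
    qed (use Pm1 in \<open>simp add: psi_def\<close>)
    moreover have "psi (TT m x) > 0" using psi_pos xm0 by simp
    ultimately have "c0 * real m powr pp \<le> D m x * Pm"
      using Dp by (smt (verit) mult_left_mono)
    then have "1 / D m x \<le> Pm / (c0 * real m powr pp)"
      using Dp mp c0_pos by (simp add: field_simps)
    also have "\<dots> = C1 * real m powr (-1 - 1 / (a * b))"
    proof -
      have e: "-1 - 1/(a*b) = -pp" by (simp add: pp_def)
      have "real m powr (-pp) = 1 / real m powr pp" by (rule powr_minus_divide)
      then show ?thesis unfolding e by (simp add: C1_def)
    qed
    finally show ?thesis using part2 d1 by simp
  qed
  ultimately show ?thesis unfolding bl_def by blast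
qed

end


theorem lemma2p11:
  fixes a b :: real and l :: nat
  assumes "(a, b) \<in> paramD" and "l \<ge> 1"
  shows "\<exists>C1 C2. C1 > 0 \<and> C2 > 0 \<and>
    (\<forall>m::nat. m \<ge> 1 \<longrightarrow>
      (\<forall>x \<in> {0<..<1}. ((Tmap a b) ^^ m) x \<ge> bseq a l \<longrightarrow>
          1 / deriv ((Tmap a b) ^^ m) x \<le> C1 * real m powr (-1 - 1 / (a * b)) \<and>
          deriv (deriv ((Tmap a b) ^^ m)) x / (deriv ((Tmap a b) ^^ m) x)\<^sup>2 \<le> C2))"
proof -
  have "prm a b" using assms(1) by (auto simp: paramD_def prm_def)
  then show ?thesis by (rule prm.final)
qed

end
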